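(* Let $N\ge 2$ and let $p$ be a star path of length $N$ with edge matrix $E$. Let $K$ be the smallest positive integer such that circularly shifting the columns of $E$ by $K$ (i.e. replacing column $n$ by column $(n+K)\bmod N$ for every $n$) yields $E$ again. Then the order of rotational symmetry of $p$ is $O_{rot}=N/K$.
   Context: A path of length $N$ is a vector $p=(p_0,\dots,p_{N-1})$ whose entries are the integers $0,\dots,N-1$ in some order; indices are cyclic, $p_N=p_0$, $s_{-1}=s_{N-1}$; $x\bmod N$ denotes the remainder in $\{0,\dots,N-1\}$. Nodes $0,\dots,N-1$ are placed at equally spaced points clockwise around a circle; the shape of $p$ is the set of chords joining node $p_n$ to node $p_{n+1}$. The order of rotational symmetry $O_{rot}$ is the number of angles $\theta\in[0,2\pi)$ such that the rotation by $\theta$ about the center of the circle maps the shape onto itself. The path differences are $d_n=p_{n+1}-p_n$, and the steps are $s_n=d_n$ if $|d_n|<N/2$; $s_n=N/2$ if $|d_n|=N/2$; $s_n=d_n-N$ if $d_n>N/2$; $s_n=d_n+N$ if $d_n<-N/2$. $p$ is a star path if $|s_n|\neq1$ for all $n$. The edge matrix $E=(e_{in})\in\mathbb{Z}^{2\times N}$: for node $n$ let $k$ be the index with $p_k=n$; take $s_k$ and $-s_{k-1}$, replace each by $0$ if its absolute value equals $N/2$, and let $e_{1n}\le e_{2n}$ be these two integers sorted in nondecreasing order. *)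

theory Defs
  imports "HOL-Analysis.Analysis"
begin

definition is_path :: "nat \<Rightarrow> nat list \<Rightarrow> bool" where
  "is_path N p \<longleftrightarrow> length p = N \<and> distinct p \<and> set p = {..<N}"

definition pdiff :: "nat \<Rightarrow> nat list \<Rightarrow> nat \<Rightarrow> int" where
  "pdiff N p n = int (p ! ((n + 1) mod N)) - int (p ! (n mod N))"

text \<open>Steps s_n.  The condition |d| = N/2 is written 2|d| = N (integer arithmetic);
  in that case N is even and N/2 = N div 2.\<close>
definition step :: "nat \<Rightarrow> nat list \<Rightarrow> nat \<Rightarrow> int" where
  "step N p n = (let d = pdiff N p n in
     if 2 * \<bar>d\<bar> < int N then d
     else if 2 * \<bar>d\<bar> = int N then int N div 2
     else if 2 * d > int N then d - int N
     else d + int N)"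

definition star_path :: "nat \<Rightarrow> nat list \<Rightarrow> bool" where
  "star_path N p \<longleftrightarrow> is_path N p \<and> (\<forall>n<N. \<bar>step N p n\<bar> \<noteq> 1)"

definition node_index :: "nat \<Rightarrow> nat list \<Rightarrow> nat \<Rightarrow> nat" where
  "node_index N p n = (THE k. k < N \<and> p ! k = n)"

definition zero_half :: "nat \<Rightarrow> int \<Rightarrow> int" where
  "zero_half N x = (if 2 * \<bar>x\<bar> = int N then 0 else x)"

text \<open>Column n of the edge matrix: the pair (e_(1n), e_(2n)) with e_(1n) \<le> e_(2n).
  Index k - 1 is taken cyclically: (k + N - 1) mod N.\<close>
definition edge_col :: "nat \<Rightarrow> nat list \<Rightarrow> nat \<Rightarrow> int \<times> int" where
  "edge_col N p n = (let k = node_index N p n;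
                         a = zero_half N (step N p k);
                         b = zero_half N (- step N p ((k + N - 1) mod N))
                     in (min a b, max a b))"

definition node_pt :: "nat \<Rightarrow> nat \<Rightarrow> complex" where
  "node_pt N n = cis (- 2 * pi * real n / real N)"

definition shape :: "nat \<Rightarrow> nat list \<Rightarrow> complex set set" where
  "shape N p = {closed_segment (node_pt N (p ! n)) (node_pt N (p ! ((n + 1) mod N))) | n. n < N}"

definition O_rot :: "nat \<Rightarrow> nat list \<Rightarrow> nat" where
  "O_rot N p = card {\<theta>::real. 0 \<le> \<theta> \<and> \<theta> < 2 * pi \<and>
                     (\<lambda>C. (\<lambda>z. cis \<theta> * z) ` C) ` shape N p = shape N p}"

end

theory Submission
  imports Defs
begin

definition cen :: "nat \<Rightarrow> int \<Rightarrow> int" where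
  "cen N d = (if 2 * \<bar>d\<bar> < int N then d
     else if 2 * \<bar>d\<bar> = int N then int N div 2
     else if 2 * d > int N then d - int N
     else d + int N)"

definition gg :: "nat \<Rightarrow> int \<Rightarrow> int" where
  "gg N r = (if 2 * r < int N then r else if 2 * r = int N then 0 else r - int N)"

lemma step_cen: "step N p n = cen N (pdiff N p n)"
  by (simp add: step_def cen_def Let_def)

lemma mod_small_neg: assumes that: "- int N < d" "d < int N" shows "d mod int N = (if 0 \<le> d then d else d + int N)"
proof (cases "0 \<le> d")
  case True
  then show ?thesis using that by simp
next
  case False
  have "d mod int N = (d + int N) mod int N" by simp
  also have "\<dots> = d + int N" using that False by (intro mod_pos_pos_trivial) auto
  finally show ?thesis using False by simp
qed

lemma zh_cen_gen:
  assumes "- int N < d" "d < int N" "d mod int N = r"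
  shows "zero_half N (cen N d) = gg N r \<and> zero_half N (- cen N d) = gg N ((- d) mod int N)"
proof -
  have m: "d mod int N = (if 0 \<le> d then d else d + int N)" using mod_small_neg assms(1,2) .
  have m2: "(-d) mod int N = (if 0 \<le> -d then -d else -d + int N)" using mod_small_neg assms(1,2) by simp
  consider (z) "d = 0" | (a) "0 < d" "2 * d < int N" | (b) "0 < d" "2 * d = int N" | (c) "0 < d" "2 * d > int N"
    | (a') "d < 0" "- 2 * d < int N" | (b') "d < 0" "- 2 * d = int N" | (c') "d < 0" "- 2 * d > int N"
    by linarith
  then show ?thesis
  proof cases
    case z then show ?thesis using assms m m2 by (simp add: cen_def gg_def zero_half_def)
  next
    case a then show ?thesis using assms m m2 by (simp add: cen_def gg_def zero_half_def)
  next
    case b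
    then have h: "int N div 2 = d" by linarith
    show ?thesis using assms m m2 b by (simp add: cen_def gg_def zero_half_def h)
  next
    case c then show ?thesis using assms m m2 by (simp add: cen_def gg_def zero_half_def)
  next
    case a' then show ?thesis using assms m m2 by (simp add: cen_def gg_def zero_half_def)
  next
    case b'
    then have h: "int N div 2 = - d" by linarith
    show ?thesis using assms m m2 b' by (simp add: cen_def gg_def zero_half_def h)
  next
    case c' then show ?thesis using assms m m2 by (simp add: cen_def gg_def zero_half_def)
  qed
qed

lemma zh_cen:
  assumes "- int N < d" "d < int N"
  shows "zero_half N (cen N d) = gg N (d mod int N)"
  using zh_cen_gen[OF assms refl] by simp

lemma zh_negcen:
  assumes "- int N < d" "d < int N"
  shows "zero_half N (- cen N d) = gg N ((- d) mod int N)"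
  using zh_cen_gen[OF assms refl] by simp

lemma gg_inj:
  assumes "1 \<le> r" "r < int N" "1 \<le> r'" "r' < int N" "gg N r = gg N r'"
  shows "r = r'"
  using assms unfolding gg_def by (auto split: if_splits)


definition arcs :: "nat \<Rightarrow> nat list \<Rightarrow> (nat \<times> nat) set" where
  "arcs N p = {(p ! n, p ! ((n + 1) mod N)) | n. n < N}"

definition adj :: "nat \<Rightarrow> nat list \<Rightarrow> nat \<Rightarrow> nat \<Rightarrow> bool" where
  "adj N p a b \<longleftrightarrow> (a, b) \<in> arcs N p \<or> (b, a) \<in> arcs N p"

definition outn :: "nat \<Rightarrow> nat list \<Rightarrow> nat \<Rightarrow> nat" where
  "outn N p a = p ! ((node_index N p a + 1) mod N)"
definition inn :: "nat \<Rightarrow> nat list \<Rightarrow> nat \<Rightarrow> nat" where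
  "inn N p a = p ! ((node_index N p a + N - 1) mod N)"

definition GG :: "nat \<Rightarrow> nat \<Rightarrow> nat \<Rightarrow> int" where
  "GG N a b = gg N ((int b - int a) mod int N)"

context
  fixes N :: nat and p :: "nat list"
  assumes P: "is_path N p" and N2: "2 \<le> N"
begin

lemma len: "length p = N" and dist: "distinct p" and setp: "set p = {..<N}"
  using P by (auto simp: is_path_def)

lemma nth_lt: "k < N \<Longrightarrow> p ! k < N"
  using setp len by (metis lessThan_iff nth_mem)

lemma nth_inj: "i < N \<Longrightarrow> j < N \<Longrightarrow> p ! i = p ! j \<longleftrightarrow> i = j"
  using dist len by (simp add: nth_eq_iff_index_eq)

lemma idx: assumes "a < N" shows "node_index N p a < N \<and> p ! node_index N p a = a"
proof -
  have "a \<in> set p" using setp assms by auto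
  then obtain k where k: "k < N" "p ! k = a" using len by (auto simp: in_set_conv_nth)
  have "node_index N p a = k" unfolding node_index_def
    using k nth_inj by (intro the_equality) auto
  then show ?thesis using k by simp
qed

lemma idx_nth: "k < N \<Longrightarrow> node_index N p (p ! k) = k"
  using idx[OF nth_lt, of k] nth_inj by (metis)

lemma predmod: "k < N \<Longrightarrow> ((k + N - 1) mod N + 1) mod N = k"
proof -
  assume k: "k < N"
  show ?thesis
  proof (cases "k = 0")
    case True then show ?thesis using N2 by simp
  next
    case False
    then have e: "k + N - 1 = (k - 1) + N" by linarith
    have "(k + N - 1) mod N = (k - 1) mod N" unfolding e by (rule mod_add_self2)
    also have "\<dots> = k - 1" using k by (intro mod_less) linarith
    finally have "(k + N - 1) mod N + 1 = k" using False by linarith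
    then show ?thesis using k by (metis mod_less)
  qed
qed

lemma succmod: "n < N \<Longrightarrow> ((n + 1) mod N + N - 1) mod N = n"
proof -
  assume n: "n < N"
  show ?thesis
  proof (cases "n + 1 = N")
    case True then have "(n + 1) mod N = 0" by simp
    moreover have "(N - 1) mod N = N - 1" using N2 by (intro mod_less) linarith
    moreover have "n = N - 1" using True by linarith
    ultimately show ?thesis by simp
  next
    case False
    then have "(n + 1) mod N = n + 1" using n by (intro mod_less) linarith
    moreover have "n + 1 + N - 1 = n + N" by linarith
    moreover have "(n + N) mod N = n" using n by simp
    ultimately show ?thesis by simp
  qed
qed

lemma sucne: "k < N \<Longrightarrow> (k + 1) mod N \<noteq> k"
proof (cases "k + 1 = N")
  case True
  assume "k < N"
  have "(k + 1) mod N = 0" using True by simp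
  then show ?thesis using True N2 by linarith
next
  case False
  assume "k < N"
  then have "(k + 1) mod N = k + 1" using False by (intro mod_less) linarith
  then show ?thesis by linarith
qed

lemma arc_out: assumes "a < N" shows "(a, b) \<in> arcs N p \<longleftrightarrow> b = outn N p a"
proof -
  let ?k = "node_index N p a"
  have k: "?k < N" "p ! ?k = a" using idx assms by auto
  have 1: "(a, b) \<in> arcs N p \<longleftrightarrow> b = outn N p a"
  proof
    assume "(a, b) \<in> arcs N p"
    then obtain n where n: "n < N" "a = p ! n" "b = p ! ((n + 1) mod N)" by (auto simp: arcs_def)
    then have "n = ?k" using k nth_inj by auto
    then show "b = outn N p a" using n by (simp add: outn_def)
  next
    assume "b = outn N p a"
    then show "(a, b) \<in> arcs N p" using k by (auto simp: arcs_def outn_def intro!: exI[of _ ?k])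
  qed
  have 2: "(b, a) \<in> arcs N p \<longleftrightarrow> b = inn N p a"
  proof
    assume "(b, a) \<in> arcs N p"
    then obtain n where n: "n < N" "b = p ! n" "a = p ! ((n + 1) mod N)" by (auto simp: arcs_def)
    then have "(n + 1) mod N = ?k" using k nth_inj N2 by auto
    then have "n = (?k + N - 1) mod N" using succmod[OF n(1)] by simp
    then show "b = inn N p a" using n by (simp add: inn_def)
  next
    assume "b = inn N p a"
    then show "(b, a) \<in> arcs N p" using k predmod[of ?k] N2
      by (auto simp: arcs_def inn_def intro!: exI[of _ "(?k + N - 1) mod N"])
  qed
  show ?thesis using 1 by simp
qed

lemma arc_in: assumes "a < N" shows "(b, a) \<in> arcs N p \<longleftrightarrow> b = inn N p a"
proof -
  let ?k = "node_index N p a"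
  have k: "?k < N" "p ! ?k = a" using idx assms by auto
  have 1: "(a, b) \<in> arcs N p \<longleftrightarrow> b = outn N p a"
  proof
    assume "(a, b) \<in> arcs N p"
    then obtain n where n: "n < N" "a = p ! n" "b = p ! ((n + 1) mod N)" by (auto simp: arcs_def)
    then have "n = ?k" using k nth_inj by auto
    then show "b = outn N p a" using n by (simp add: outn_def)
  next
    assume "b = outn N p a"
    then show "(a, b) \<in> arcs N p" using k by (auto simp: arcs_def outn_def intro!: exI[of _ ?k])
  qed
  have 2: "(b, a) \<in> arcs N p \<longleftrightarrow> b = inn N p a"
  proof
    assume "(b, a) \<in> arcs N p"
    then obtain n where n: "n < N" "b = p ! n" "a = p ! ((n + 1) mod N)" by (auto simp: arcs_def)
    then have "(n + 1) mod N = ?k" using k nth_inj N2 by auto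
    then have "n = (?k + N - 1) mod N" using succmod[OF n(1)] by simp
    then show "b = inn N p a" using n by (simp add: inn_def)
  next
    assume "b = inn N p a"
    then show "(b, a) \<in> arcs N p" using k predmod[of ?k] N2
      by (auto simp: arcs_def inn_def intro!: exI[of _ "(?k + N - 1) mod N"])
  qed
  show ?thesis using 2 by simp
qed

lemma adj_iff: assumes "a < N" shows "adj N p a b \<longleftrightarrow> b = outn N p a \<or> b = inn N p a"
proof -
  let ?k = "node_index N p a"
  have k: "?k < N" "p ! ?k = a" using idx assms by auto
  have 1: "(a, b) \<in> arcs N p \<longleftrightarrow> b = outn N p a"
  proof
    assume "(a, b) \<in> arcs N p"
    then obtain n where n: "n < N" "a = p ! n" "b = p ! ((n + 1) mod N)" by (auto simp: arcs_def)
    then have "n = ?k" using k nth_inj by auto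
    then show "b = outn N p a" using n by (simp add: outn_def)
  next
    assume "b = outn N p a"
    then show "(a, b) \<in> arcs N p" using k by (auto simp: arcs_def outn_def intro!: exI[of _ ?k])
  qed
  have 2: "(b, a) \<in> arcs N p \<longleftrightarrow> b = inn N p a"
  proof
    assume "(b, a) \<in> arcs N p"
    then obtain n where n: "n < N" "b = p ! n" "a = p ! ((n + 1) mod N)" by (auto simp: arcs_def)
    then have "(n + 1) mod N = ?k" using k nth_inj N2 by auto
    then have "n = (?k + N - 1) mod N" using succmod[OF n(1)] by simp
    then show "b = inn N p a" using n by (simp add: inn_def)
  next
    assume "b = inn N p a"
    then show "(b, a) \<in> arcs N p" using k predmod[of ?k] N2
      by (auto simp: arcs_def inn_def intro!: exI[of _ "(?k + N - 1) mod N"])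
  qed
  show ?thesis using 1 2 by (auto simp: adj_def)
qed

lemma outn_lt: "a < N \<Longrightarrow> outn N p a < N" and inn_lt: "a < N \<Longrightarrow> inn N p a < N"
  using N2 by (auto simp: outn_def inn_def intro!: nth_lt)

lemma outn_ne: assumes "a < N" shows "outn N p a \<noteq> a"
proof -
  let ?k = "node_index N p a"
  have k: "?k < N" "p ! ?k = a" using idx assms by auto
  have "(?k + 1) mod N \<noteq> ?k" using k sucne by simp
  then show ?thesis using k nth_inj[of "(?k + 1) mod N" ?k] N2 unfolding outn_def by auto
qed

lemma inn_ne: assumes "a < N" shows "inn N p a \<noteq> a"
proof -
  let ?k = "node_index N p a"
  have k: "?k < N" "p ! ?k = a" using idx assms by auto
  have "(?k + N - 1) mod N \<noteq> ?k" using k predmod[of ?k] sucne[of ?k] by auto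
  then show ?thesis using k nth_inj[of "(?k + N - 1) mod N" ?k] N2 unfolding inn_def by auto
qed

lemma col_eq: assumes "a < N"
  shows "edge_col N p a = (min (GG N a (outn N p a)) (GG N a (inn N p a)), max (GG N a (outn N p a)) (GG N a (inn N p a)))"
proof -
  let ?k = "node_index N p a"
  have k: "?k < N" "p ! ?k = a" using idx assms by auto
  have o: "zero_half N (step N p ?k) = GG N a (outn N p a)"
  proof -
    have km: "p ! (?k mod N) = a" using k by simp
    show ?thesis
    unfolding step_cen GG_def pdiff_def outn_def km using assms k nth_lt[of "(?k + 1) mod N"] N2
    by (intro zh_cen) auto
  qed
  have i: "zero_half N (- step N p ((?k + N - 1) mod N)) = GG N a (inn N p a)"
  proof -
    let ?b = "p ! ((?k + N - 1) mod N)"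
    have km: "p ! (((?k + N - 1) mod N + 1) mod N) = a" using k predmod by simp
    have km2: "p ! ((?k + N - 1) mod N mod N) = ?b" by simp
    have b: "?b < N" using nth_lt N2 by simp
    have "zero_half N (- cen N (int a - int ?b)) = gg N ((- (int a - int ?b)) mod int N)"
      using assms b by (intro zh_negcen) auto
    then show ?thesis unfolding step_cen GG_def pdiff_def inn_def km km2 by simp
  qed
  show ?thesis unfolding edge_col_def Let_def o i ..
qed

end

definition Col :: "nat \<Rightarrow> nat list \<Rightarrow> nat \<Rightarrow> bool" where
  "Col N p j \<longleftrightarrow> (\<forall>n<N. edge_col N p ((n + j) mod N) = edge_col N p n)"

lemma Col_sub:
  assumes "Col N p j" "Col N p K" "K \<le> j" shows "Col N p (j - K)"
  unfolding Col_def
proof (intro allI impI)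
  fix n assume n: "n < N"
  let ?m = "(n + (j - K)) mod N"
  have m: "?m < N" using n by simp
  have "(?m + K) mod N = (n + j) mod N"
    using assms(3) by (simp add: mod_add_left_eq)
  then have "edge_col N p ((n + j) mod N) = edge_col N p ?m"
    using assms(2) m unfolding Col_def by metis
  then show "edge_col N p ?m = edge_col N p n" using assms(1) n unfolding Col_def by metis
qed

lemma Col_add:
  assumes "Col N p a" "Col N p b" shows "Col N p (a + b)"
  unfolding Col_def
proof (intro allI impI)
  fix n assume n: "n < N"
  have "(n + (a + b)) mod N = ((n + a) mod N + b) mod N" by (simp add: mod_add_left_eq add.assoc)
  moreover have "(n + a) mod N < N" using n by simp
  ultimately show "edge_col N p ((n + (a + b)) mod N) = edge_col N p n"
    using assms n unfolding Col_def by metis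
qed

lemma Col_0: "Col N p 0" by (simp add: Col_def)

lemma Col_mult: "Col N p K \<Longrightarrow> Col N p (K * i)"
  by (induction i) (auto simp: Col_0 intro: Col_add)

lemma Col_N: "Col N p N" by (simp add: Col_def)

lemma Col_mod:
  assumes "Col N p K" "0 < K" shows "Col N p j \<Longrightarrow> Col N p (j mod K)"
proof (induction j rule: less_induct)
  case (less j)
  show ?case
  proof (cases "j < K")
    case True then show ?thesis using less.prems by simp
  next
    case False
    then have "Col N p (j - K)" using Col_sub less.prems assms by simp
    moreover have "j - K < j" using False assms by simp
    ultimately have "Col N p ((j - K) mod K)" using less.IH by blast
    moreover have "(j - K) mod K = j mod K" using False by (simp add: mod_if)
    ultimately show ?thesis by simp
  qed
qed

lemma count_col:
  assumes N: "0 < N" and K: "K = (LEAST K. 0 < K \<and> (\<forall>n<N. edge_col N p ((n + K) mod N) = edge_col N p n))"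
  shows "card {j. j < N \<and> Col N p j} = N div K" "K dvd N" "0 < K"
proof -
  have ex: "0 < N \<and> Col N p N" using N Col_N by simp
  have KP: "0 < K \<and> Col N p K" unfolding K using LeastI[of "\<lambda>K. 0 < K \<and> Col N p K", OF ex]
    by (simp add: Col_def)
  have least: "\<And>m. 0 < m \<Longrightarrow> Col N p m \<Longrightarrow> K \<le> m" unfolding K
    by (rule Least_le) (simp add: Col_def)
  have zero: "\<And>j. Col N p j \<Longrightarrow> j mod K = 0"
  proof (rule ccontr)
    fix j assume "Col N p j" "j mod K \<noteq> 0"
    then have "Col N p (j mod K)" "0 < j mod K" using Col_mod KP by auto
    then have "K \<le> j mod K" using least by blast
    moreover have "j mod K < K" using KP by simp
    ultimately show False by simp
  qed
  show dvd: "K dvd N" using zero[OF Col_N] by (simp add: dvd_eq_mod_eq_0)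
  show "0 < K" using KP by simp
  have eq: "{j. j < N \<and> Col N p j} = (\<lambda>i. K * i) ` {..<N div K}"
  proof
    show "{j. j < N \<and> Col N p j} \<subseteq> (\<lambda>i. K * i) ` {..<N div K}"
    proof
      fix j assume j: "j \<in> {j. j < N \<and> Col N p j}"
      then have "j = K * (j div K)" using zero by (metis mem_Collect_eq mult_div_mod_eq add_0_right)
      moreover have "j div K < N div K"
      proof -
        have "K * (j div K) < K * (N div K)" using j dvd \<open>j = K * (j div K)\<close> by simp
        then show ?thesis by simp
      qed
      ultimately show "j \<in> (\<lambda>i. K * i) ` {..<N div K}" by blast
    qed
  next
    show "(\<lambda>i. K * i) ` {..<N div K} \<subseteq> {j. j < N \<and> Col N p j}"
    proof
      fix j assume "j \<in> (\<lambda>i. K * i) ` {..<N div K}"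
      then obtain i where i: "i < N div K" "j = K * i" by auto
      have "K * i < K * (N div K)" using i KP by simp
      also have "\<dots> = N" using dvd by simp
      finally show "j \<in> {j. j < N \<and> Col N p j}" using i Col_mult KP by auto
    qed
  qed
  have "inj_on (\<lambda>i. K * i) {..<N div K}" using KP by (auto simp: inj_on_def)
  then show "card {j. j < N \<and> Col N p j} = N div K" unfolding eq by (simp add: card_image)
qed


definition Inv :: "nat \<Rightarrow> nat list \<Rightarrow> nat \<Rightarrow> bool" where
  "Inv N p j \<longleftrightarrow> (\<forall>a b. (a, b) \<in> arcs N p \<longrightarrow> adj N p ((a + j) mod N) ((b + j) mod N))"

lemma GG_shift: "GG N ((a + j) mod N) ((b + j) mod N) = GG N a b"
proof -
  have "(int ((b + j) mod N) - int ((a + j) mod N)) mod int N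
      = ((int b + int j) mod int N - (int a + int j) mod int N) mod int N"
    by (simp add: zmod_int)
  also have "\<dots> = ((int b + int j) - (int a + int j)) mod int N" by (simp add: mod_diff_eq)
  also have "\<dots> = (int b - int a) mod int N" by simp
  finally show ?thesis by (simp add: GG_def)
qed

lemma mm_set: "(min u v, max u v) = (min u' v', max u' v') \<Longrightarrow> {u, v} = {u', (v'::int)}"
  by (auto simp: min_def max_def split: if_splits)

lemma set_mm: "{u, v} = {u', (v'::int)} \<Longrightarrow> (min u v, max u v) = (min u' v', max u' v')"
  by (auto simp: doubleton_eq_iff)

lemma shift_inj: assumes "x < (N::nat)" "y < N" "(x + j) mod N = (y + j) mod N" shows "x = y"
proof -
  have "int ((x + j) mod N) = int ((y + j) mod N)" using assms by simp
  then have "(int x + int j) mod int N = (int y + int j) mod int N" by (simp add: zmod_int)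
  then have "((int x + int j) mod int N - int j) mod int N = ((int y + int j) mod int N - int j) mod int N" by simp
  then have "int x mod int N = int y mod int N" by (simp add: mod_diff_left_eq)
  then show ?thesis using assms by simp
qed

lemma adj_sym: "adj N p a b \<Longrightarrow> adj N p b a" by (auto simp: adj_def)

context
  fixes N :: nat and p :: "nat list"
  assumes P: "is_path N p" and N2: "2 \<le> N"
begin

lemma arcs_lt: "(a, b) \<in> arcs N p \<Longrightarrow> a < N \<and> b < N"
  using nth_lt[OF P N2] N2 by (auto simp: arcs_def)

lemma adj_lt: "adj N p a b \<Longrightarrow> a < N \<and> b < N"
  using arcs_lt by (auto simp: adj_def)

lemma GG_inj: assumes "c < N" "x < N" "y < N" "x \<noteq> c" "y \<noteq> c" "GG N c x = GG N c y"
  shows "x = y"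
proof -
  have r: "1 \<le> (int z - int c) mod int N \<and> (int z - int c) mod int N < int N" if "z < N" "z \<noteq> c" for z
  proof -
    have "(int z - int c) mod int N \<noteq> 0"
    proof
      assume "(int z - int c) mod int N = 0"
      then have "int N dvd (int z - int c)" by (simp add: dvd_eq_mod_eq_0)
      then obtain q where q: "int z - int c = int N * q" by (auto elim: dvdE)
      have "\<bar>int z - int c\<bar> < int N" using that assms by auto
      have "q = 0"
      proof (rule ccontr)
        assume "q \<noteq> 0"
        then have "1 \<le> \<bar>q\<bar>" by simp
        then have "int N * 1 \<le> int N * \<bar>q\<bar>" by (intro mult_left_mono) auto
        also have "\<dots> = \<bar>int z - int c\<bar>" using q by (simp add: abs_mult)
        finally show False using \<open>\<bar>int z - int c\<bar> < int N\<close> by simp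
      qed
      then show False using q that by simp
    qed
    moreover have "0 \<le> (int z - int c) mod int N" "(int z - int c) mod int N < int N" using N2 by auto
    ultimately show ?thesis by linarith
  qed
  have "(int x - int c) mod int N = (int y - int c) mod int N"
    using gg_inj[OF conjunct1[OF r] conjunct2[OF r] conjunct1[OF r] conjunct2[OF r]] assms
    unfolding GG_def by blast
  then have "((int x - int c) mod int N + int c) mod int N = ((int y - int c) mod int N + int c) mod int N"
    by simp
  then have "int x mod int N = int y mod int N" by (simp add: mod_add_left_eq)
  then show ?thesis using assms by simp
qed

lemma nb_card: assumes "a < N" "c < N" shows "(outn N p a = inn N p a) \<longleftrightarrow> (outn N p c = inn N p c)"
proof -
  have key: "outn N p x = inn N p x \<longleftrightarrow> N = 2" if x: "x < N" for x
  proof -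
    let ?k = "node_index N p x"
    have k: "?k < N" using idx[OF P N2 x] by simp
    have "(?k + 1) mod N = (?k + N - 1) mod N \<longleftrightarrow> N = 2"
    proof
      assume "N = 2" then show "(?k + 1) mod N = (?k + N - 1) mod N" by simp
    next
      assume h: "(?k + 1) mod N = (?k + N - 1) mod N"
      show "N = 2"
      proof (rule ccontr)
        assume "N \<noteq> 2"
        then have N3: "3 \<le> N" using N2 by simp
        consider "?k = 0" | "?k + 1 = N" | "0 < ?k \<and> ?k + 1 < N" using k by linarith
        then show False
        proof cases
          case 1
          then have "(?k + 1) mod N = 1" "(?k + N - 1) mod N = N - 1" using N3 by simp_all
          then show False using h N3 by simp
        next
          case 2
          then have "(?k + 1) mod N = 0" by simp
          moreover have e: "?k + N - 1 = (?k - 1) + N" using 2 N3 by linarith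
          have "(?k + N - 1) mod N = ?k - 1" unfolding e mod_add_self2 using k by (intro mod_less) linarith
          ultimately show False using h 2 N3 by simp
        next
          case 3
          then have "(?k + 1) mod N = ?k + 1" by simp
          moreover have e: "?k + N - 1 = (?k - 1) + N" using 3 N3 by linarith
          have "(?k + N - 1) mod N = ?k - 1" unfolding e mod_add_self2 using k by (intro mod_less) linarith
          ultimately show False using h 3 by simp
        qed
      qed
    qed
    moreover have "(?k + 1) mod N < N" "(?k + N - 1) mod N < N" using N2 by simp_all
    ultimately show ?thesis unfolding outn_def inn_def
      using nth_inj[OF P N2, of "(?k + 1) mod N" "(?k + N - 1) mod N"] by simp
  qed
  show ?thesis using key assms by simp
qed

lemma nbset: assumes "a < N" shows "{b. adj N p a b} = {outn N p a, inn N p a}"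
  using adj_iff[OF P N2 assms] by auto

lemma Inv_Col: assumes "Inv N p j" shows "Col N p j"
  unfolding Col_def
proof (intro allI impI)
  fix a assume a: "a < N"
  let ?s = "\<lambda>x. (x + j) mod N"
  let ?c = "?s a"
  have c: "?c < N" using N2 by simp
  have sub: "?s ` {outn N p a, inn N p a} \<subseteq> {outn N p ?c, inn N p ?c}"
  proof -
    have "(a, outn N p a) \<in> arcs N p" "(inn N p a, a) \<in> arcs N p"
      using arc_out[OF P N2 a] arc_in[OF P N2 a] by auto
    then have "adj N p ?c (?s (outn N p a))" "adj N p ?c (?s (inn N p a))"
      using assms adj_sym unfolding Inv_def by blast+
    then show ?thesis using nbset[OF c] by auto
  qed
  have inj: "inj_on ?s {..<N}"
    by (rule inj_onI) (auto intro: shift_inj)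
  have eq: "?s ` {outn N p a, inn N p a} = {outn N p ?c, inn N p ?c}"
  proof (cases "outn N p a = inn N p a")
    case True
    then have "outn N p ?c = inn N p ?c" using nb_card a c by blast
    then show ?thesis using sub True by auto
  next
    case False
    then have F2: "outn N p ?c \<noteq> inn N p ?c" using nb_card a c by blast
    have "card (?s ` {outn N p a, inn N p a}) = 2"
    proof -
      have "inj_on ?s {outn N p a, inn N p a}"
        using outn_lt[OF P N2 a] inn_lt[OF P N2 a] unfolding inj_on_def by (metis insert_iff empty_iff shift_inj)
      then show ?thesis using False by (simp add: card_image)
    qed
    moreover have "card {outn N p ?c, inn N p ?c} = 2" using F2 by simp
    ultimately show ?thesis using sub by (intro card_subset_eq) auto
  qed
  have "{GG N ?c (outn N p ?c), GG N ?c (inn N p ?c)} = GG N ?c ` {outn N p ?c, inn N p ?c}" by simp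
  also have "\<dots> = GG N ?c ` ?s ` {outn N p a, inn N p a}" using eq by simp
  also have "\<dots> = {GG N a (outn N p a), GG N a (inn N p a)}" by (simp add: GG_shift)
  finally have X: "{GG N ?c (outn N p ?c), GG N ?c (inn N p ?c)} = {GG N a (outn N p a), GG N a (inn N p a)}" .
  show "edge_col N p ?c = edge_col N p a"
    unfolding col_eq[OF P N2 a] col_eq[OF P N2 c] using set_mm[OF X] .
qed

lemma Col_Inv: assumes "Col N p j" shows "Inv N p j"
  unfolding Inv_def
proof (intro allI impI)
  fix a b assume ab: "(a, b) \<in> arcs N p"
  let ?s = "\<lambda>x. (x + j) mod N"
  let ?c = "?s a"
  have a: "a < N" and b: "b < N" using arcs_lt[OF ab] by auto
  have c: "?c < N" using N2 by simp
  have bo: "b = outn N p a" using ab arc_out[OF P N2 a] by blast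
  have ne: "b \<noteq> a" using outn_ne[OF P N2 a] bo by simp
  have inj: "inj_on ?s {..<N}"
    by (rule inj_onI) (auto intro: shift_inj)
  have sbne: "?s b \<noteq> ?c" using inj a b ne by (auto dest: inj_onD)
  have "edge_col N p ?c = edge_col N p a" using assms a unfolding Col_def by blast
  then have "{GG N ?c (outn N p ?c), GG N ?c (inn N p ?c)} = {GG N a (outn N p a), GG N a (inn N p a)}"
    unfolding col_eq[OF P N2 a] col_eq[OF P N2 c] by (rule mm_set)
  moreover have "GG N a b = GG N ?c (?s b)" by (simp add: GG_shift)
  ultimately have "GG N ?c (?s b) \<in> {GG N ?c (outn N p ?c), GG N ?c (inn N p ?c)}" using bo by auto
  then obtain b' where b': "b' \<in> {outn N p ?c, inn N p ?c}" "GG N ?c (?s b) = GG N ?c b'" by auto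
  have b'lt: "b' < N" "b' \<noteq> ?c" using b' outn_lt[OF P N2 c] inn_lt[OF P N2 c] outn_ne[OF P N2 c] inn_ne[OF P N2 c] by auto
  have "?s b = b'" using GG_inj[OF c _ b'lt(1) sbne b'lt(2) b'(2)] N2 by simp
  then show "adj N p ?c (?s b)" using b' adj_iff[OF P N2 c] by auto
qed

end

lemma cis_inj: assumes "0 \<le> x" "x < 2 * pi" "0 \<le> y" "y < 2 * pi" "cis x = cis y" shows "x = y"
proof -
  have "cis (x - y) = 1" using assms(5) by (simp flip: cis_divide)
  then have "cos (x - y) = 1" by (metis complex.sel(1) one_complex.sel(1) cis.sel(1))
  then obtain n :: int where n: "x - y = n * 2 * pi" by (auto simp: cos_one_2pi_int)
  have lt: "\<bar>real_of_int n\<bar> * (2 * pi) < 1 * (2 * pi)"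
  proof -
    have "\<bar>x - y\<bar> < 2 * pi" using assms by auto
    then show ?thesis using n by (simp add: abs_mult)
  qed
  then have "\<bar>real_of_int n\<bar> < 1" using mult_right_less_imp_less[OF lt] pi_gt_zero by auto
  then have "n = 0" by linarith
  then show ?thesis using n by simp
qed

definition th :: "nat \<Rightarrow> nat \<Rightarrow> real" where
  "th N j = 2 * pi * real ((N - j) mod N) / real N"

lemma th_range: "0 < N \<Longrightarrow> 0 \<le> th N j \<and> th N j < 2 * pi"
proof -
  assume N: "0 < N"
  have "real ((N - j) mod N) < real N" using N by simp
  then have "real ((N - j) mod N) / real N < 1" using N by simp
  then have "2 * pi * (real ((N - j) mod N) / real N) < 2 * pi * 1" using pi_gt_zero by (intro mult_strict_left_mono) auto
  then show ?thesis unfolding th_def by auto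
qed

lemma th_inj: "0 < N \<Longrightarrow> inj_on (th N) {..<N}"
proof (rule inj_onI)
  fix x y assume N: "0 < N" and xy: "x \<in> {..<N}" "y \<in> {..<N}" "th N x = th N y"
  then have "real ((N - x) mod N) = real ((N - y) mod N)" unfolding th_def using pi_gt_zero by (auto simp: field_simps)
  then have "(N - x) mod N = (N - y) mod N" by linarith
  then show "x = y" using xy by (cases "x = 0"; cases "y = 0") auto
qed

lemma rot_node: assumes "j < N" shows "cis (th N j) * node_pt N n = node_pt N ((n + j) mod N)"
proof -
  have N: "0 < N" using assms by simp
  have per: "node_pt N (m mod N) = node_pt N m" for m
  proof -
    have "real m = real (m mod N) + real N * real (m div N)"
      by (metis of_nat_add of_nat_mult mod_mult_div_eq add.commute mult.commute)
    then have "- 2 * pi * real m / real N = - 2 * pi * real (m mod N) / real N + 2 * pi * (- real (m div N))"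
      using N by (simp add: field_simps)
    then have "cis (- 2 * pi * real m / real N) = cis (- 2 * pi * real (m mod N) / real N) * cis (2 * pi * (- real (m div N)))"
      by (simp add: cis_mult)
    also have "cis (2 * pi * (- real (m div N))) = 1"
      by (rule cis_multiple_2pi) (metis Ints_minus Ints_of_nat)
    finally show ?thesis unfolding node_pt_def by simp
  qed
  show ?thesis
  proof (cases "j = 0")
    case True
    then show ?thesis using per by (simp add: th_def)
  next
    case False
    then have "(N - j) mod N = N - j" using assms by simp
    then have "th N j = 2 * pi - 2 * pi * real j / real N" unfolding th_def using assms N
      by (simp add: field_simps of_nat_diff)
    then have ar: "th N j + (- 2 * pi * real n / real N) = 2 * pi + (- 2 * pi * real (n + j) / real N)"
      using N by (simp add: field_simps)
    have "cis (th N j) * node_pt N n = cis (th N j + (- 2 * pi * real n / real N))"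
      unfolding node_pt_def by (simp add: cis_mult)
    also have "\<dots> = cis (2 * pi + (- 2 * pi * real (n + j) / real N))" unfolding ar ..
    finally have "cis (th N j) * node_pt N n = cis (2 * pi + (- 2 * pi * real (n + j) / real N))" .
    also have "\<dots> = cis (2 * pi) * cis (- 2 * pi * real (n + j) / real N)" by (simp only: cis_mult)
    also have "\<dots> = node_pt N (n + j)" unfolding node_pt_def by simp
    finally show ?thesis using per by simp
  qed
qed

lemma node_inj: assumes "a < N" "b < N" "node_pt N a = node_pt N b" shows "a = b"
proof -
  have "node_pt N 0 = 1" by (simp add: node_pt_def)
  then have "node_pt N x = cis (th N x)" if "x < N" for x using rot_node[OF that, of 0] that by simp
  then have "cis (th N a) = cis (th N b)" using assms by simp
  then have "th N a = th N b" using th_range[of N] assms by (intro cis_inj) auto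
  then show ?thesis using th_inj[of N] assms by (auto dest: inj_onD)
qed

lemma rot_seg: "(\<lambda>z. c * z) ` closed_segment u v = closed_segment (c * u) (c * (v::complex))"
  by (rule closed_segment_linear_image[symmetric]) simp


context
  fixes N :: nat and p :: "nat list"
  assumes P: "is_path N p" and N2: "2 \<le> N"
begin

lemma shape_eq: "shape N p = (\<lambda>(a, b). closed_segment (node_pt N a) (node_pt N b)) ` arcs N p"
  unfolding shape_def arcs_def by auto

lemma finite_arcs: "finite (arcs N p)"
proof -
  have "arcs N p = (\<lambda>n. (p ! n, p ! ((n + 1) mod N))) ` {..<N}" unfolding arcs_def by auto
  then show ?thesis by simp
qed

lemma seg_eq: assumes "a < N" "b < N" "c < N" "d < N"
  shows "closed_segment (node_pt N a) (node_pt N b) = closed_segment (node_pt N c) (node_pt N d) \<longleftrightarrow> {a, b} = {c, d}"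
proof -
  have "{node_pt N a, node_pt N b} = {node_pt N c, node_pt N d} \<longleftrightarrow> {a, b} = {c, d}"
  proof
    assume "{node_pt N a, node_pt N b} = {node_pt N c, node_pt N d}"
    then show "{a, b} = {c, d}" unfolding doubleton_eq_iff using node_inj assms by metis
  qed auto
  then show ?thesis by simp
qed

lemma rot_shape: assumes "j < N"
  shows "(\<lambda>C. (\<lambda>z. cis (th N j) * z) ` C) ` shape N p
       = (\<lambda>(a, b). closed_segment (node_pt N ((a + j) mod N)) (node_pt N ((b + j) mod N))) ` arcs N p"
  unfolding shape_eq image_image
  by (rule image_cong[OF refl]) (auto simp: rot_seg rot_node[OF assms] split: prod.splits)

lemma inj_rot: "inj_on (\<lambda>C. (\<lambda>z. cis t * z) ` C) X"
proof -
  have "inj (\<lambda>z. cis t * z)" by (auto simp: inj_on_def)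
  then show ?thesis by (auto simp: inj_on_def inj_image_eq_iff)
qed

lemma good_iff: assumes j: "j < N"
  shows "(\<lambda>C. (\<lambda>z. cis (th N j) * z) ` C) ` shape N p = shape N p \<longleftrightarrow> Inv N p j"
proof
  assume Iv: "Inv N p j"
  have "(\<lambda>C. (\<lambda>z. cis (th N j) * z) ` C) ` shape N p \<subseteq> shape N p"
    unfolding rot_shape[OF j]
  proof
    fix S assume "S \<in> (\<lambda>(a, b). closed_segment (node_pt N ((a + j) mod N)) (node_pt N ((b + j) mod N))) ` arcs N p"
    then obtain a b where ab: "(a, b) \<in> arcs N p" and S: "S = closed_segment (node_pt N ((a + j) mod N)) (node_pt N ((b + j) mod N))"
      by auto
    have "adj N p ((a + j) mod N) ((b + j) mod N)" using Iv ab unfolding Inv_def by blast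
    then consider "((a + j) mod N, (b + j) mod N) \<in> arcs N p" | "((b + j) mod N, (a + j) mod N) \<in> arcs N p"
      unfolding adj_def by blast
    then show "S \<in> shape N p"
    proof cases
      case 1
      then show ?thesis unfolding shape_eq S by (rule rev_image_eqI) simp
    next
      case 2
      then show ?thesis unfolding shape_eq S by (rule rev_image_eqI) (simp add: closed_segment_commute)
    qed
  qed
  then show "(\<lambda>C. (\<lambda>z. cis (th N j) * z) ` C) ` shape N p = shape N p"
    by (intro endo_inj_surj inj_rot) (auto simp: shape_eq finite_arcs)
next
  assume eq: "(\<lambda>C. (\<lambda>z. cis (th N j) * z) ` C) ` shape N p = shape N p"
  show "Inv N p j" unfolding Inv_def
  proof (intro allI impI)
    fix a b assume ab: "(a, b) \<in> arcs N p"
    have lt: "a < N" "b < N" using arcs_lt[OF P N2 ab] by auto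
    have "closed_segment (node_pt N ((a + j) mod N)) (node_pt N ((b + j) mod N)) \<in> shape N p"
      using eq ab unfolding rot_shape[OF j] by (auto intro: rev_image_eqI)
    then obtain c d where cd: "(c, d) \<in> arcs N p"
      "closed_segment (node_pt N ((a + j) mod N)) (node_pt N ((b + j) mod N)) = closed_segment (node_pt N c) (node_pt N d)"
      unfolding shape_eq by auto
    have "c < N" "d < N" using arcs_lt[OF P N2 cd(1)] by auto
    moreover have "(a + j) mod N < N" "(b + j) mod N < N" using N2 by simp_all
    ultimately have "{(a + j) mod N, (b + j) mod N} = {c, d}" using cd(2) seg_eq by blast
    then show "adj N p ((a + j) mod N) ((b + j) mod N)" using cd(1) unfolding adj_def doubleton_eq_iff by auto
  qed
qed

lemma good_angle: assumes "0 \<le> t" "t < 2 * pi" "(\<lambda>C. (\<lambda>z. cis t * z) ` C) ` shape N p = shape N p"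
  shows "\<exists>j<N. t = th N j"
proof -
  let ?a = "p ! 0" and ?b = "p ! ((0 + 1) mod N)"
  have ab: "(?a, ?b) \<in> arcs N p" using N2 unfolding arcs_def by auto
  have "closed_segment (node_pt N ?a) (node_pt N ?b) \<in> shape N p"
    unfolding shape_eq using ab by (rule rev_image_eqI) simp
  then have "(\<lambda>z. cis t * z) ` closed_segment (node_pt N ?a) (node_pt N ?b) \<in> (\<lambda>C. (\<lambda>z. cis t * z) ` C) ` shape N p"
    by (rule imageI)
  then have "closed_segment (cis t * node_pt N ?a) (cis t * node_pt N ?b) \<in> shape N p"
    unfolding assms(3) rot_seg .
  then obtain c d where cd: "(c, d) \<in> arcs N p"
    "closed_segment (cis t * node_pt N ?a) (cis t * node_pt N ?b) = closed_segment (node_pt N c) (node_pt N d)"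
    unfolding shape_eq by auto
  have cdlt: "c < N" "d < N" using arcs_lt[OF P N2 cd(1)] by auto
  have alt: "?a < N" using arcs_lt[OF P N2 ab] by auto
  have "{cis t * node_pt N ?a, cis t * node_pt N ?b} = {node_pt N c, node_pt N d}"
    using cd(2) closed_segment_eq by blast
  then have "cis t * node_pt N ?a \<in> {node_pt N c, node_pt N d}" by blast
  then obtain e where e: "e < N" "cis t * node_pt N ?a = node_pt N e" using cdlt by auto
  define j where "j = (e + N - ?a) mod N"
  have jN: "j < N" using N2 unfolding j_def by simp
  have "(?a + j) mod N = e"
  proof -
    have "(?a + j) mod N = (?a + (e + N - ?a)) mod N" unfolding j_def by (simp add: mod_add_right_eq)
    also have "?a + (e + N - ?a) = e + N" using alt by simp
    finally show ?thesis using e by simp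
  qed
  then have "cis (th N j) * node_pt N ?a = node_pt N e" using rot_node[OF jN] by simp
  then have "cis t * node_pt N ?a = cis (th N j) * node_pt N ?a" using e by simp
  moreover have "node_pt N ?a \<noteq> 0" by (simp add: node_pt_def)
  ultimately have "cis t = cis (th N j)" by simp
  then have "t = th N j" using th_range[of N j] N2 assms by (intro cis_inj) auto
  then show ?thesis using jN by blast
qed

lemma O_rot_card: "O_rot N p = card {j. j < N \<and> Col N p j}"
proof -
  have eq: "{t::real. 0 \<le> t \<and> t < 2 * pi \<and> (\<lambda>C. (\<lambda>z. cis t * z) ` C) ` shape N p = shape N p}
      = th N ` {j. j < N \<and> Col N p j}"
  proof
    show "{t::real. 0 \<le> t \<and> t < 2 * pi \<and> (\<lambda>C. (\<lambda>z. cis t * z) ` C) ` shape N p = shape N p}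
      \<subseteq> th N ` {j. j < N \<and> Col N p j}"
    proof
      fix t assume "t \<in> {t::real. 0 \<le> t \<and> t < 2 * pi \<and> (\<lambda>C. (\<lambda>z. cis t * z) ` C) ` shape N p = shape N p}"
      then have t: "0 \<le> t" "t < 2 * pi" "(\<lambda>C. (\<lambda>z. cis t * z) ` C) ` shape N p = shape N p" by auto
      then obtain j where j: "j < N" "t = th N j" using good_angle by blast
      then have "Inv N p j" using good_iff t(3) by simp
      then have "Col N p j" using Inv_Col[OF P N2] by blast
      then show "t \<in> th N ` {j. j < N \<and> Col N p j}" using j by auto
    qed
  next
    show "th N ` {j. j < N \<and> Col N p j} \<subseteq>
      {t::real. 0 \<le> t \<and> t < 2 * pi \<and> (\<lambda>C. (\<lambda>z. cis t * z) ` C) ` shape N p = shape N p}"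
    proof
      fix t assume "t \<in> th N ` {j. j < N \<and> Col N p j}"
      then obtain j where j: "j < N" "Col N p j" "t = th N j" by auto
      then have "Inv N p j" using Col_Inv[OF P N2] by blast
      then show "t \<in> {t::real. 0 \<le> t \<and> t < 2 * pi \<and> (\<lambda>C. (\<lambda>z. cis t * z) ` C) ` shape N p = shape N p}"
        using good_iff[OF j(1)] th_range[of N j] N2 j by auto
    qed
  qed
  have "inj_on (th N) {j. j < N \<and> Col N p j}" using th_inj[of N] N2 by (auto intro: inj_on_subset)
  then show ?thesis unfolding O_rot_def eq by (simp add: card_image)
qed

end

theorem mainTheorem6:
  fixes N :: nat and p :: "nat list" and K :: nat
  assumes "N \<ge> 2"
    and "star_path N p"
    and "K = (LEAST K. 0 < K \<and> (\<forall>n<N. edge_col N p ((n + K) mod N) = edge_col N p n))"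
  shows "real (O_rot N p) = real N / real K"
proof -
  have P: "is_path N p" using assms(2) by (simp add: star_path_def)
  have c: "card {j. j < N \<and> Col N p j} = N div K" "K dvd N" "0 < K"
    using count_col[OF _ assms(3)] assms(1) by auto
  have "O_rot N p = N div K" using O_rot_card[OF P assms(1)] c by simp
  then show ?thesis using c by (simp add: real_of_nat_div)
qed

end
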